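(* (i) $(I(\mathbb N),\tau_1)$ is a Polish topological semigroup, and $\rho$ is a complete metric compatible with $\tau_1$. (ii) $(I(\mathbb N),\tau_2)$ is a Polish topological semigroup, and $\rho^\ast$ is a complete metric compatible with $\tau_2$.
   Context: $I(\mathbb N)$ is the set of all bijections $f:A\to B$ with $A,B\subseteq\mathbb N$ (including the empty map), $\mathrm{dom}(f)=A$, $\mathrm{im}(f)=B$, under composition ($\mathrm{dom}(f\circ g)=g^{-1}(\mathrm{dom}(f)\cap\mathrm{im}(g))$). For $x,y$: $v(x,y)=\{f: x\in\mathrm{dom}(f), f(x)=y\}$, $w_1(x)=\{f: x\notin\mathrm{dom}(f)\}$, $w_2(y)=\{f: y\notin\mathrm{im}(f)\}$. $\tau_1$ is the topology generated by all $v(x,y)$, $w_1(x)$; $\tau_2$ by all $v(x,y)$, $w_2(y)$. For $f,g\in I(\mathbb N)$ and $n\in\mathbb N$ let $a_{(f,g)}(n)=0$ if $n\in\mathrm{dom}(f)\cap\mathrm{dom}(g)$ or $n\notin\mathrm{dom}(f)\cup\mathrm{dom}(g)$, and $a_{(f,g)}(n)=1$ otherwise; let $b_{(f,g)}(n)=\min\{1,|f(n)-g(n)|\}$ if $n\in\mathrm{dom}(f)\cap\mathrm{dom}(g)$ and $0$ otherwise. Define $\rho(f,g)=\sum_{n\in\mathbb N}\frac{a_{(f,g)}(n)+b_{(f,g)}(n)}{2^n}$ and $\rho^\ast(f,g)=\rho(f^{-1},g^{-1})$. *)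

theory Defs
  imports "HOL-Analysis.Analysis"
begin

definition Inat :: "(nat \<rightharpoonup> nat) set" where
  "Inat = {f. inj_on f (dom f)}"

text \<open>Composition: map_comp f g (apply g first, then f), i.e. f after g.\<close>

definition pinv :: "(nat \<rightharpoonup> nat) \<Rightarrow> (nat \<rightharpoonup> nat)" where
  "pinv f = (\<lambda>y. if y \<in> ran f then Some (THE x. f x = Some y) else None)"

definition vset :: "nat \<Rightarrow> nat \<Rightarrow> (nat \<rightharpoonup> nat) set" where
  "vset x y = {f \<in> Inat. f x = Some y}"

definition w1set :: "nat \<Rightarrow> (nat \<rightharpoonup> nat) set" where
  "w1set x = {f \<in> Inat. x \<notin> dom f}"

definition w2set :: "nat \<Rightarrow> (nat \<rightharpoonup> nat) set" where
  "w2set y = {f \<in> Inat. y \<notin> ran f}"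

definition tau1 :: "(nat \<rightharpoonup> nat) topology" where
  "tau1 = topology_generated_by ({vset x y | x y. True} \<union> {w1set x | x. True})"

definition tau2 :: "(nat \<rightharpoonup> nat) topology" where
  "tau2 = topology_generated_by ({vset x y | x y. True} \<union> {w2set y | y. True})"

definition acoef :: "(nat \<rightharpoonup> nat) \<Rightarrow> (nat \<rightharpoonup> nat) \<Rightarrow> nat \<Rightarrow> real" where
  "acoef f g n = (if (n \<in> dom f \<and> n \<in> dom g) \<or> (n \<notin> dom f \<union> dom g) then 0 else 1)"

definition bcoef :: "(nat \<rightharpoonup> nat) \<Rightarrow> (nat \<rightharpoonup> nat) \<Rightarrow> nat \<Rightarrow> real" where
  "bcoef f g n = (if n \<in> dom f \<and> n \<in> dom g
      then min 1 \<bar>real (the (f n)) - real (the (g n))\<bar> else 0)"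

definition rho :: "(nat \<rightharpoonup> nat) \<Rightarrow> (nat \<rightharpoonup> nat) \<Rightarrow> real" where
  "rho f g = (\<Sum>n. (acoef f g n + bcoef f g n) / 2 ^ n)"

definition rho_star :: "(nat \<rightharpoonup> nat) \<Rightarrow> (nat \<rightharpoonup> nat) \<Rightarrow> real" where
  "rho_star f g = rho (pinv f) (pinv g)"

definition Polish_space :: "'a topology \<Rightarrow> bool" where
  "Polish_space X \<longleftrightarrow> completely_metrizable_space X \<and> separable_space X"

definition topological_semigroup :: "'a topology \<Rightarrow> ('a \<Rightarrow> 'a \<Rightarrow> 'a) \<Rightarrow> bool" where
  "topological_semigroup X m \<longleftrightarrow>
     (\<forall>a\<in>topspace X. \<forall>b\<in>topspace X. \<forall>c\<in>topspace X. m (m a b) c = m a (m b c)) \<and>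
     continuous_map (prod_topology X X) X (\<lambda>(a, b). m a b)"

end

theory Submission imports Defs begin

definition dt :: "(nat \<rightharpoonup> nat) \<Rightarrow> (nat \<rightharpoonup> nat) \<Rightarrow> nat \<Rightarrow> real" where
  "dt u v n = (if u n = v n then 0 else 1) / 2 ^ n"

lemma dt_nonneg: "0 \<le> dt u v n" by (simp add: dt_def)

lemma dt_le: "dt u v n \<le> (1/2) ^ n"
  by (simp add: dt_def power_divide)

lemma summable_dt: "summable (dt u v)"
  by (rule summable_comparison_test[where g="\<lambda>n. (1/2::real)^n"])
     (auto simp: dt_le dt_nonneg intro!: exI[of _ 0])

lemma dt_sum_small:
  assumes "\<And>n. n < N \<Longrightarrow> u n = v n"
  shows "suminf (dt u v) \<le> 2 / 2 ^ N"
proof -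
  have "suminf (dt u v) = (\<Sum>n. dt u v (n + N)) + (\<Sum>i<N. dt u v i)"
    by (rule suminf_split_initial_segment[OF summable_dt])
  also have "(\<Sum>i<N. dt u v i) = 0" using assms by (simp add: dt_def)
  also have "(\<Sum>n. dt u v (n + N)) \<le> (\<Sum>n. (1/2::real) ^ N * (1/2)^n)"
  proof (rule suminf_le)
    show "summable (\<lambda>n. dt u v (n + N))" using summable_dt by (simp add: summable_iff_shift)
    show "summable (\<lambda>n. (1/2::real) ^ N * (1/2)^n)" by (intro summable_mult summable_geometric) simp
    fix n show "dt u v (n + N) \<le> (1/2::real) ^ N * (1/2)^n"
      using dt_le[of u v "n+N"] by (simp add: power_add mult.commute)
  qed
  also have "(\<Sum>n. (1/2::real) ^ N * (1/2)^n) = (1/2)^N * 2"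
    by (subst suminf_mult) (simp_all add: suminf_geometric summable_geometric)
  finally show ?thesis by (simp add: power_divide)
qed

lemma dt_sum_big:
  assumes "u n \<noteq> v n"
  shows "1 / 2 ^ n \<le> suminf (dt u v)"
proof -
  have "sum (dt u v) {n} \<le> suminf (dt u v)"
    by (rule sum_le_suminf[OF summable_dt]) (auto simp: dt_nonneg)
  then show ?thesis using assms by (simp add: dt_def)
qed

lemma dt_zero_iff: "suminf (dt u v) = 0 \<longleftrightarrow> u = v"
proof
  assume "suminf (dt u v) = 0"
  then have "\<forall>n. dt u v n = 0" using suminf_eq_zero_iff[OF summable_dt] dt_nonneg by blast
  then show "u = v" by (auto simp: dt_def fun_eq_iff split: if_splits)
qed (simp add: dt_def[abs_def])

lemma dt_tri: "suminf (dt u w) \<le> suminf (dt u v) + suminf (dt v w)"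
proof -
  have "suminf (dt u w) \<le> (\<Sum>n. dt u v n + dt v w n)"
    by (rule suminf_le) (auto simp: summable_dt intro!: summable_add, auto simp: dt_def intro!: divide_right_mono)
  also have "\<dots> = suminf (dt u v) + suminf (dt v w)"
    by (rule suminf_add[symmetric]) (simp_all add: summable_dt)
  finally show ?thesis .
qed

lemma dt_commute: "dt u v = dt v u" by (auto simp: dt_def fun_eq_iff)

lemma rho_dt: "rho f g = suminf (dt f g)"
proof -
  have "acoef f g n + bcoef f g n = (if f n = g n then 0 else 1)" for n
    by (cases "f n"; cases "g n") (auto simp: acoef_def bcoef_def domIff)
  then show ?thesis unfolding rho_def dt_def by simp
qed

definition dT :: "((nat \<rightharpoonup> nat) \<Rightarrow> (nat \<rightharpoonup> nat)) \<Rightarrow> (nat \<rightharpoonup> nat) \<Rightarrow> (nat \<rightharpoonup> nat) \<Rightarrow> real" where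
  "dT T f g = suminf (dt (T f) (T g))"

definition gen :: "(nat \<rightharpoonup> nat) set \<Rightarrow> ((nat \<rightharpoonup> nat) \<Rightarrow> (nat \<rightharpoonup> nat)) \<Rightarrow> (nat \<rightharpoonup> nat) set set" where
  "gen A T = {{f\<in>A. T f x = c} | x c. True}"

lemma metric_dT: "inj_on T A \<Longrightarrow> Metric_space A (dT T)"
  unfolding dT_def
  apply (rule Metric_space.intro)
  apply (simp add: suminf_nonneg summable_dt dt_nonneg)
  apply (simp add: dt_commute)
  apply (simp add: dt_zero_iff inj_on_eq_iff)
  apply (rule dt_tri)
  done

lemma topo_dT:
  assumes inj: "inj_on T A"
  shows "Metric_space.mtopology A (dT T) = topology_generated_by (gen A T)"
proof -
  interpret Metric_space A "dT T" by (rule metric_dT[OF inj])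
  have basic_open: "openin mtopology S" if "S \<in> gen A T" for S
  proof -
    obtain x c where S: "S = {f\<in>A. T f x = c}" using \<open>S \<in> gen A T\<close> by (auto simp: gen_def)
    show ?thesis unfolding openin_mtopology
    proof (intro conjI allI impI)
      show "S \<subseteq> A" using S by auto
      fix f assume f: "f \<in> S"
      show "\<exists>r>0. mball f r \<subseteq> S"
      proof (intro exI conjI)
        show "(0::real) < 1 / 2 ^ x" by simp
        show "mball f (1 / 2 ^ x) \<subseteq> S"
        proof
          fix g assume g: "g \<in> mball f (1 / 2 ^ x)"
          have "T f x = T g x"
          proof (rule ccontr)
            assume "T f x \<noteq> T g x"
            then have "1 / 2 ^ x \<le> dT T f g" unfolding dT_def by (rule dt_sum_big)
            then show False using g by auto
          qed
          then show "g \<in> S" using g f S by auto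
        qed
      qed
    qed
  qed
  have cyl: "generate_topology_on (gen A T) {g\<in>A. \<forall>n<N. T g n = T f n}" if "N > 0" for N f
  proof -
    have "{g\<in>A. \<forall>n<N. T g n = T f n} = \<Inter> ((\<lambda>n. {g\<in>A. T g n = T f n}) ` {..<N})"
      using that by auto
    moreover have "generate_topology_on (gen A T) (\<Inter> ((\<lambda>n. {g\<in>A. T g n = T f n}) ` {..<N}))"
      by (rule generate_topology_on_Inter) (use that in \<open>auto simp: gen_def intro!: generate_topology_on.Basis\<close>)
    ultimately show ?thesis by simp
  qed
  show ?thesis
  proof (rule topology_eq[THEN iffD2], intro allI iffI)
    fix U assume U: "openin mtopology U"
    obtain N :: "real \<Rightarrow> nat" where NN: "\<And>r. r > 0 \<Longrightarrow> N r > 0 \<and> 2 / 2 ^ N r < r"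
    proof -
      have "\<exists>n>0. 2 / 2 ^ n < r" if "r > 0" for r :: real
      proof -
        obtain n where "(1/2::real) ^ n < r / 2" using real_arch_pow_inv[of "r/2" "1/2"] \<open>r>0\<close> by auto
        moreover have "(1/2::real)^n = 1/2^n" by (simp add: power_divide)
        moreover have "2 / 2 ^ (Suc n) = (1::real) / 2^n" by simp
        ultimately have "2 / 2 ^ (Suc n) < r" using \<open>r>0\<close> by linarith
        then show ?thesis by blast
      qed
      then show thesis using that by metis
    qed
    define C where "C f = (SOME r. r > 0 \<and> mball f r \<subseteq> U)" for f
    have C: "C f > 0 \<and> mball f (C f) \<subseteq> U" if "f \<in> U" for f
      unfolding C_def by (rule someI_ex) (use U that in \<open>auto simp: openin_mtopology\<close>)
    define K where "K f = {g\<in>A. \<forall>n<N (C f). T g n = T f n}" for f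
    have "U = \<Union> (K ` U)"
    proof
      show "U \<subseteq> \<Union> (K ` U)"
        using U openin_subset by (fastforce simp: K_def)
      show "\<Union> (K ` U) \<subseteq> U"
      proof
        fix g assume "g \<in> \<Union> (K ` U)"
        then obtain f where f: "f \<in> U" and g: "g \<in> K f" by auto
        have fA: "f \<in> A" using f U openin_subset by fastforce
        have "dT T f g \<le> 2 / 2 ^ N (C f)"
          unfolding dT_def by (rule dt_sum_small) (use g in \<open>auto simp: K_def\<close>)
        also have "\<dots> < C f" using NN C[OF f] by auto
        finally have "g \<in> mball f (C f)" using g fA by (auto simp: K_def)
        then show "g \<in> U" using C[OF f] by auto
      qed
    qed
    moreover have "generate_topology_on (gen A T) (\<Union> (K ` U))"
      by (rule generate_topology_on.UN) (use cyl NN C in \<open>auto simp: K_def\<close>)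
    ultimately show "openin (topology_generated_by (gen A T)) U"
      by (simp add: openin_topology_generated_by_iff)
  next
    fix U assume "openin (topology_generated_by (gen A T)) U"
    then have "generate_topology_on (gen A T) U" by (simp add: openin_topology_generated_by_iff)
    then show "openin mtopology U"
      by (rule generate_topology_on_coarsest[where T="openin mtopology", rotated 2])
         (use basic_open in auto)
  qed
qed

lemma pow_small: "(r::real) > 0 \<Longrightarrow> \<exists>n>0. 2 / 2 ^ n < r"
proof -
  assume "r > 0"
  obtain n where "(1/2::real) ^ n < r / 2" using real_arch_pow_inv[of "r/2" "1/2"] \<open>r>0\<close> by auto
  moreover have "(1/2::real)^n = 1/2^n" by (simp add: power_divide)
  moreover have "2 / 2 ^ (Suc n) = (1::real) / 2^n" by simp
  ultimately have "2 / 2 ^ (Suc n) < r" using \<open>r>0\<close> by linarith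
  then show ?thesis by blast
qed

lemma complete_dT:
  assumes inj: "inj_on T A"
    and lim: "\<And>\<sigma> h. (\<And>k::nat. \<sigma> k \<in> A) \<Longrightarrow> (\<And>n. \<exists>K. \<forall>k\<ge>K. T (\<sigma> k) n = h n) \<Longrightarrow> \<exists>f\<in>A. T f = h"
  shows "Metric_space.mcomplete A (dT T)"
proof -
  interpret Metric_space A "dT T" by (rule metric_dT[OF inj])
  show ?thesis unfolding mcomplete_def
  proof (intro allI impI)
    fix \<sigma> assume cs: "MCauchy \<sigma>"
    then have sA: "\<And>k. \<sigma> k \<in> A" by (auto simp: MCauchy_def)
    have "\<forall>n. \<exists>K. \<forall>k k'. K \<le> k \<longrightarrow> K \<le> k' \<longrightarrow> dT T (\<sigma> k) (\<sigma> k') < 1/2^n"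
      using cs by (auto simp: MCauchy_def)
    then obtain Kf where Kf: "\<And>n k k'. Kf n \<le> k \<Longrightarrow> Kf n \<le> k' \<Longrightarrow> dT T (\<sigma> k) (\<sigma> k') < 1/2^n"
      by metis
    define h where "h n = T (\<sigma> (Kf n)) n" for n
    have eq: "T (\<sigma> k) n = h n" if "Kf n \<le> k" for k n
    proof (rule ccontr)
      assume "T (\<sigma> k) n \<noteq> h n"
      then have "1/2^n \<le> dT T (\<sigma> k) (\<sigma> (Kf n))" unfolding dT_def h_def by (rule dt_sum_big)
      with Kf[OF that order_refl] show False by simp
    qed
    then obtain f where fA: "f \<in> A" and Tf: "T f = h"
      using lim[of \<sigma> h] sA eq by blast
    have "limitin mtopology \<sigma> f sequentially"
      unfolding limitin_metric
    proof (intro conjI allI impI fA)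
      fix e :: real assume "e > 0"
      then obtain M where M: "2 / 2 ^ M < e" using pow_small by blast
      have "\<sigma> k \<in> A \<and> dT T (\<sigma> k) f < e" if k: "(\<Sum>n<M. Kf n) \<le> k" for k
      proof -
        have "dT T (\<sigma> k) f \<le> 2 / 2 ^ M"
          unfolding dT_def
        proof (rule dt_sum_small)
          fix n assume "n < M"
          then have "Kf n \<le> (\<Sum>n<M. Kf n)" by (intro member_le_sum) auto
          then show "T (\<sigma> k) n = T f n" using eq[of n k] k Tf by simp
        qed
        then show ?thesis using M sA by simp
      qed
      then show "\<forall>\<^sub>F k in sequentially. \<sigma> k \<in> A \<and> dT T (\<sigma> k) f < e"
        unfolding eventually_sequentially by blast
    qed
    then show "\<exists>x. limitin mtopology \<sigma> x sequentially" by blast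
  qed
qed

lemma sep_dT:
  assumes inj: "inj_on T A" and D: "countable D" "D \<subseteq> A"
    and dense: "\<And>f N. f \<in> A \<Longrightarrow> \<exists>g\<in>D. \<forall>n<N. T g n = T f n"
  shows "separable_space (Metric_space.mtopology A (dT T))"
proof -
  interpret Metric_space A "dT T" by (rule metric_dT[OF inj])
  have "mtopology closure_of D = A"
    unfolding metric_closure_of
  proof (intro set_eqI iffI)
    fix x assume x: "x \<in> A"
    have "\<exists>y\<in>D. y \<in> mball x r" if rp: "r > 0" for r
    proof -
      obtain N where N: "2 / 2 ^ N < r" using pow_small[OF rp] by blast
      obtain g where g: "g \<in> D" "\<forall>n<N. T g n = T x n" using dense[OF x] by blast
      have "dT T x g \<le> 2 / 2 ^ N" unfolding dT_def by (rule dt_sum_small) (use g in auto)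
      then show ?thesis using g N x D by (auto intro!: bexI[of _ g])
    qed
    then show "x \<in> {x \<in> A. \<forall>r>0. \<exists>y\<in>D. y \<in> mball x r}" using x by auto
  qed auto
  then show ?thesis unfolding separable_space_def using D by auto
qed

lemma inj_Inat: "f \<in> Inat \<Longrightarrow> f a = Some y \<Longrightarrow> f b = Some y \<Longrightarrow> a = b"
  unfolding Inat_def by (metis domI inj_onD mem_Collect_eq)

lemma pinv_Some: "f \<in> Inat \<Longrightarrow> pinv f y = Some x \<longleftrightarrow> f x = Some y"
proof -
  assume f: "f \<in> Inat"
  show ?thesis
  proof
    assume h: "pinv f y = Some x"
    then have "y \<in> ran f" by (auto simp: pinv_def split: if_splits)
    then obtain x0 where x0: "f x0 = Some y" by (auto simp: ran_def)
    have "(THE x. f x = Some y) = x0"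
    proof (rule the_equality)
      show "f x0 = Some y" by (rule x0)
      fix z assume "f z = Some y"
      from f this x0 show "z = x0" by (rule inj_Inat)
    qed
    then show "f x = Some y" using h x0 \<open>y \<in> ran f\<close> by (auto simp: pinv_def)
  next
    assume h: "f x = Some y"
    then have r: "y \<in> ran f" by (auto simp: ran_def)
    have "(THE x'. f x' = Some y) = x"
    proof (rule the_equality)
      show "f x = Some y" by (rule h)
      fix z assume "f z = Some y"
      from f this h show "z = x" by (rule inj_Inat)
    qed
    then show "pinv f y = Some x" using r by (simp add: pinv_def)
  qed
qed

lemma pinv_None: "pinv f y = None \<longleftrightarrow> y \<notin> ran f"
  by (simp add: pinv_def)

lemma option_eqI: "(\<And>y. a = Some y \<longleftrightarrow> b = Some y) \<Longrightarrow> a = b"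
  by (cases a; cases b) auto

lemma pinv_Inat: assumes f: "f \<in> Inat" shows "pinv f \<in> Inat"
  unfolding Inat_def mem_Collect_eq
proof (rule inj_onI)
  fix a b assume a: "a \<in> dom (pinv f)" and b: "b \<in> dom (pinv f)"
    and e: "pinv f a = pinv f b"
  obtain x where x: "pinv f a = Some x" using a by auto
  have 1: "f x = Some a" using pinv_Some[OF f, of a x] x by simp
  have "pinv f b = Some x" using e x by simp
  then have 2: "f x = Some b" using pinv_Some[OF f, of b x] by simp
  from 1 2 show "a = b" by simp
qed

lemma pinv_pinv: "f \<in> Inat \<Longrightarrow> pinv (pinv f) = f"
  by (rule ext, rule option_eqI) (simp add: pinv_Some pinv_Inat)

lemma inj_pinv: "inj_on pinv Inat"
  by (metis inj_onI pinv_pinv)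

lemma comp_Inat: "f \<in> Inat \<Longrightarrow> g \<in> Inat \<Longrightarrow> f \<circ>\<^sub>m g \<in> Inat"
  unfolding Inat_def mem_Collect_eq
proof (rule inj_onI)
  fix a b assume f: "inj_on f (dom f)" and g: "inj_on g (dom g)"
    and a: "a \<in> dom (f \<circ>\<^sub>m g)" and b: "b \<in> dom (f \<circ>\<^sub>m g)" and e: "(f \<circ>\<^sub>m g) a = (f \<circ>\<^sub>m g) b"
  obtain ma where ma: "g a = Some ma" "f ma \<noteq> None" using a by (auto simp: map_comp_def split: option.splits)
  obtain mb where mb: "g b = Some mb" "f mb \<noteq> None" using b by (auto simp: map_comp_def split: option.splits)
  have "f ma = f mb" using e ma mb by (simp add: map_comp_def)
  then have "ma = mb" using f ma(2) mb(2) by (metis domIff inj_onD)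
  then show "a = b" using g ma mb by (metis domI inj_onD)
qed

lemma limit_Inat:
  assumes "\<And>k::nat. \<sigma> k \<in> Inat" "\<And>n. \<exists>K. \<forall>k\<ge>K. \<sigma> k n = h n"
  shows "h \<in> Inat"
  unfolding Inat_def mem_Collect_eq
proof (rule inj_onI)
  fix a b assume a: "a \<in> dom h" and b: "b \<in> dom h" and e: "h a = h b"
  obtain Ka where Ka: "\<forall>k\<ge>Ka. \<sigma> k a = h a" using assms(2) by blast
  obtain Kb where Kb: "\<forall>k\<ge>Kb. \<sigma> k b = h b" using assms(2) by blast
  define k where "k = max Ka Kb"
  obtain y where y: "h a = Some y" using a by auto
  have "\<sigma> k a = Some y" "\<sigma> k b = Some y" using Ka Kb e y unfolding k_def by auto
  with assms(1)[of k] show "a = b" by (rule inj_Inat)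
qed

definition trunc :: "nat option list \<Rightarrow> (nat \<rightharpoonup> nat)" where
  "trunc xs = (\<lambda>n. if n < length xs then xs ! n else None)"

definition Dset :: "(nat \<rightharpoonup> nat) set" where
  "Dset = Inat \<inter> range trunc"

lemma countable_Dset: "countable Dset"
  unfolding Dset_def by (rule countable_subset[OF _ countable_image[of UNIV trunc]]) auto

lemma dense_Dset: "f \<in> Inat \<Longrightarrow> \<exists>g\<in>Dset. \<forall>n<N. g n = f n"
proof -
  assume f: "f \<in> Inat"
  define g where "g = trunc (map f [0..<N])"
  have g: "g = (\<lambda>n. if n < N then f n else None)" by (auto simp: g_def trunc_def)
  have "g \<in> Inat" unfolding Inat_def mem_Collect_eq
  proof (rule inj_onI)
    fix a b assume a: "a \<in> dom g" and b: "b \<in> dom g" and e: "g a = g b"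
    obtain y where y: "g a = Some y" using a by auto
    then have "f a = Some y" "f b = Some y" using e unfolding g by (auto split: if_splits)
    with f show "a = b" by (rule inj_Inat)
  qed
  moreover have "g \<in> range trunc" unfolding g_def by simp
  ultimately have "g \<in> Dset" by (simp add: Dset_def)
  moreover have "\<forall>n<N. g n = f n" by (simp add: g)
  ultimately show ?thesis by blast
qed

lemma gen_id: "gen Inat id = {vset x y | x y. True} \<union> {w1set x | x. True}"
proof (intro set_eqI iffI)
  fix S assume "S \<in> gen Inat id"
  then obtain x c where S: "S = {f\<in>Inat. f x = c}" by (auto simp: gen_def)
  show "S \<in> {vset x y | x y. True} \<union> {w1set x | x. True}"
  proof (cases c)
    case None
    then have "S = w1set x" by (auto simp: S w1set_def)
    then show ?thesis by blast
  next
    case (Some y)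
    then have "S = vset x y" by (auto simp: S vset_def)
    then show ?thesis by blast
  qed
next
  fix S assume "S \<in> {vset x y | x y. True} \<union> {w1set x | x. True}"
  then consider x y where "S = vset x y" | x where "S = w1set x" by blast
  then show "S \<in> gen Inat id"
  proof cases
    case (1 x y)
    then have "S = {f\<in>Inat. id f x = Some y}" by (auto simp: vset_def)
    then show ?thesis unfolding gen_def by blast
  next
    case (2 x)
    then have "S = {f\<in>Inat. id f x = None}" by (auto simp: w1set_def)
    then show ?thesis unfolding gen_def by blast
  qed
qed

lemma gen_pinv: "gen Inat pinv = {vset x y | x y. True} \<union> {w2set y | y. True}"
proof (intro set_eqI iffI)
  fix S assume "S \<in> gen Inat pinv"
  then obtain x c where S: "S = {f\<in>Inat. pinv f x = c}" by (auto simp: gen_def)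
  show "S \<in> {vset x y | x y. True} \<union> {w2set y | y. True}"
  proof (cases c)
    case None
    then have "S = w2set x" by (auto simp: S w2set_def pinv_None)
    then show ?thesis by blast
  next
    case (Some y)
    then have "S = vset y x" by (auto simp: S vset_def pinv_Some)
    then show ?thesis by blast
  qed
next
  fix S assume "S \<in> {vset x y | x y. True} \<union> {w2set y | y. True}"
  then consider x y where "S = vset x y" | y where "S = w2set y" by blast
  then show "S \<in> gen Inat pinv"
  proof cases
    case (1 x y)
    then have "S = {f\<in>Inat. pinv f y = Some x}" by (auto simp: vset_def pinv_Some)
    then show ?thesis unfolding gen_def by blast
  next
    case (2 y)
    then have "S = {f\<in>Inat. pinv f y = None}" by (auto simp: w2set_def pinv_None)
    then show ?thesis unfolding gen_def by blast
  qed
qed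

lemma rho_eq: "rho = dT id"
  by (intro ext) (simp add: rho_dt dT_def)

lemma rho_star_eq: "rho_star = dT pinv"
  by (intro ext) (simp add: rho_star_def rho_dt dT_def)

lemma open_UN_times:
  "(\<And>m. openin X (A m)) \<Longrightarrow> (\<And>m. openin Y (B m)) \<Longrightarrow> openin (prod_topology X Y) (\<Union>m. A m \<times> B m)"
  by (rule openin_Union) (auto simp: openin_prod_Times_iff)

lemma pre_v: "(\<lambda>(a,b). a \<circ>\<^sub>m b) -` vset x y \<inter> (Inat \<times> Inat) = (\<Union>m. vset m y \<times> vset x m)"
  by (auto simp: vset_def map_comp_Some_iff comp_Inat)

lemma pre_w1: "(\<lambda>(a,b). a \<circ>\<^sub>m b) -` w1set x \<inter> (Inat \<times> Inat) = (Inat \<times> w1set x) \<union> (\<Union>m. w1set m \<times> vset x m)"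
  by (auto simp: vset_def w1set_def map_comp_None_iff comp_Inat domIff) (metis option.simps(3))

lemma pre_w2: "(\<lambda>(a,b). a \<circ>\<^sub>m b) -` w2set y \<inter> (Inat \<times> Inat) = (w2set y \<times> Inat) \<union> (\<Union>m. vset m y \<times> w2set m)"
proof (intro set_eqI iffI)
  fix p assume p: "p \<in> (\<lambda>(a,b). a \<circ>\<^sub>m b) -` w2set y \<inter> (Inat \<times> Inat)"
  obtain a b where ab: "p = (a,b)" "a \<in> Inat" "b \<in> Inat" "y \<notin> ran (a \<circ>\<^sub>m b)"
    using p by (auto simp: w2set_def)
  show "p \<in> (w2set y \<times> Inat) \<union> (\<Union>m. vset m y \<times> w2set m)"
  proof (cases "y \<in> ran a")
    case False then show ?thesis using ab by (auto simp: w2set_def)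
  next
    case True
    then obtain m where m: "a m = Some y" by (auto simp: ran_def)
    have "m \<notin> ran b"
    proof
      assume "m \<in> ran b"
      then obtain x where "b x = Some m" by (auto simp: ran_def)
      then have "(a \<circ>\<^sub>m b) x = Some y" using m by simp
      then show False using ab by (auto simp: ran_def)
    qed
    then show ?thesis using ab m by (auto simp: w2set_def vset_def)
  qed
next
  fix p assume p: "p \<in> (w2set y \<times> Inat) \<union> (\<Union>m. vset m y \<times> w2set m)"
  obtain a b where ab: "p = (a,b)" "a \<in> Inat" "b \<in> Inat"
    using p by (auto simp: w2set_def vset_def)
  have "y \<notin> ran (a \<circ>\<^sub>m b)"
  proof
    assume "y \<in> ran (a \<circ>\<^sub>m b)"
    then obtain x m where xm: "b x = Some m" "a m = Some y" by (auto simp: ran_def map_comp_Some_iff)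
    from p ab show False
    proof auto
      assume "a \<in> w2set y" then show False using xm by (auto simp: w2set_def ran_def)
    next
      fix m' assume "a \<in> vset m' y" "b \<in> w2set m'"
      then have "a m' = Some y" "m' \<notin> ran b" by (auto simp: vset_def w2set_def)
      moreover from ab(2) \<open>a m' = Some y\<close> xm(2) have "m' = m" by (rule inj_Inat)
      ultimately show False using xm(1) by (auto simp: ran_def)
    qed
  qed
  then show "p \<in> (\<lambda>(a,b). a \<circ>\<^sub>m b) -` w2set y \<inter> (Inat \<times> Inat)"
    using ab by (auto simp: w2set_def comp_Inat)
qed

lemma tsg:
  assumes tau: "\<tau> = topology_generated_by S" and SU: "\<Union>S = Inat"
    and pre: "\<And>U. U \<in> S \<Longrightarrow> openin (prod_topology \<tau> \<tau>) ((\<lambda>(a,b). a \<circ>\<^sub>m b) -` U \<inter> (Inat \<times> Inat))"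
  shows "topological_semigroup \<tau> (\<circ>\<^sub>m)"
proof -
  have ts: "topspace \<tau> = Inat" using tau SU by simp
  have "continuous_map (prod_topology \<tau> \<tau>) (topology_generated_by S) (\<lambda>(a,b). a \<circ>\<^sub>m b)"
    by (rule continuous_on_generated_topo) (use pre ts SU comp_Inat in auto)
  moreover have "m (m a b) c = m a (m b c)" if "m = (\<circ>\<^sub>m)" for a b c :: "nat \<rightharpoonup> nat" and m
    using that by (auto simp: map_comp_def fun_eq_iff split: option.splits)
  ultimately show ?thesis unfolding topological_semigroup_def using tau by simp
qed

lemma UN_gen: "\<Union>(gen Inat T) = Inat"
  by (auto simp: gen_def)

theorem theorem4p3:
  shows "(topspace tau1 = Inat \<and> Polish_space tau1 \<and> topological_semigroup tau1 (\<circ>\<^sub>m)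
           \<and> Metric_space Inat rho \<and> Metric_space.mcomplete Inat rho
           \<and> Metric_space.mtopology Inat rho = tau1)
       \<and> (topspace tau2 = Inat \<and> Polish_space tau2 \<and> topological_semigroup tau2 (\<circ>\<^sub>m)
           \<and> Metric_space Inat rho_star \<and> Metric_space.mcomplete Inat rho_star
           \<and> Metric_space.mtopology Inat rho_star = tau2)"
proof -
  have injid: "inj_on id Inat" by simp
  have M1: "Metric_space Inat rho" unfolding rho_eq by (rule metric_dT[OF injid])
  have M2: "Metric_space Inat rho_star" unfolding rho_star_eq by (rule metric_dT[OF inj_pinv])
  have T1: "Metric_space.mtopology Inat rho = tau1"
    unfolding rho_eq tau1_def topo_dT[OF injid] gen_id ..
  have T2: "Metric_space.mtopology Inat rho_star = tau2"
    unfolding rho_star_eq tau2_def topo_dT[OF inj_pinv] gen_pinv ..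
  have C1: "Metric_space.mcomplete Inat rho" unfolding rho_eq
  proof (rule complete_dT[OF injid])
    fix \<sigma> :: "nat \<Rightarrow> _" and h
    assume "\<And>k. \<sigma> k \<in> Inat" "\<And>n. \<exists>K. \<forall>k\<ge>K. id (\<sigma> k) n = h n"
    then show "\<exists>f\<in>Inat. id f = h" using limit_Inat[of \<sigma> h] by auto
  qed
  have C2: "Metric_space.mcomplete Inat rho_star" unfolding rho_star_eq
  proof (rule complete_dT[OF inj_pinv])
    fix \<sigma> :: "nat \<Rightarrow> _" and h
    assume a: "\<And>k. \<sigma> k \<in> Inat" "\<And>n. \<exists>K. \<forall>k\<ge>K. pinv (\<sigma> k) n = h n"
    have "h \<in> Inat" using limit_Inat[of "\<lambda>k. pinv (\<sigma> k)" h] a pinv_Inat by auto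
    then show "\<exists>f\<in>Inat. pinv f = h" by (intro bexI[of _ "pinv h"]) (auto simp: pinv_Inat pinv_pinv)
  qed
  have S1: "separable_space tau1"
    unfolding T1[symmetric] rho_eq
  proof (rule sep_dT[OF injid countable_Dset])
    show "Dset \<subseteq> Inat" by (auto simp: Dset_def)
    fix f N assume "f \<in> Inat"
    then show "\<exists>g\<in>Dset. \<forall>n<N. id g n = id f n" using dense_Dset[of f N] by simp
  qed
  have S2: "separable_space tau2"
    unfolding T2[symmetric] rho_star_eq
  proof (rule sep_dT[OF inj_pinv])
    show "countable (pinv ` Dset)" using countable_Dset by simp
    show "pinv ` Dset \<subseteq> Inat" by (auto simp: Dset_def pinv_Inat)
    fix f N assume f: "f \<in> Inat"
    obtain g0 where g0: "g0 \<in> Dset" "\<forall>n<N. g0 n = pinv f n" using dense_Dset[OF pinv_Inat[OF f]] by blast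
    have "g0 \<in> Inat" using g0 by (simp add: Dset_def)
    then show "\<exists>g\<in>pinv ` Dset. \<forall>n<N. pinv g n = pinv f n"
      using g0 by (intro bexI[of _ "pinv g0"]) (auto simp: pinv_pinv)
  qed
  have P1: "Polish_space tau1" unfolding Polish_space_def completely_metrizable_space_def
    using M1 C1 T1 S1 by (intro conjI exI[of _ Inat] exI[of _ rho]) auto
  have P2: "Polish_space tau2" unfolding Polish_space_def completely_metrizable_space_def
    using M2 C2 T2 S2 by (intro conjI exI[of _ Inat] exI[of _ rho_star]) auto
  have tsp1: "topspace tau1 = Inat" unfolding tau1_def gen_id[symmetric] using UN_gen[of id] by simp
  have tsp2: "topspace tau2 = Inat" unfolding tau2_def gen_pinv[symmetric] using UN_gen[of pinv] by simp
  have vopen1: "openin tau1 (vset x y)" for x y unfolding tau1_def by (rule topology_generated_by_Basis) blast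
  have wopen1: "openin tau1 (w1set x)" for x unfolding tau1_def by (rule topology_generated_by_Basis) blast
  have vopen2: "openin tau2 (vset x y)" for x y unfolding tau2_def by (rule topology_generated_by_Basis) blast
  have wopen2: "openin tau2 (w2set x)" for x unfolding tau2_def by (rule topology_generated_by_Basis) blast
  have SG1: "topological_semigroup tau1 (\<circ>\<^sub>m)"
  proof (rule tsg[OF tau1_def])
    show "\<Union>({vset x y | x y. True} \<union> {w1set x | x. True}) = Inat" using UN_gen[of id] gen_id by simp
    fix U assume "U \<in> {vset x y | x y. True} \<union> {w1set x | x. True}"
    then consider x y where "U = vset x y" | x where "U = w1set x" by blast
    then show "openin (prod_topology tau1 tau1) ((\<lambda>(a,b). a \<circ>\<^sub>m b) -` U \<inter> (Inat \<times> Inat))"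
    proof cases
      case (1 x y) show ?thesis unfolding 1 pre_v by (intro open_UN_times vopen1)
    next
      case (2 x) show ?thesis unfolding 2 pre_w1
        by (intro openin_Un open_UN_times vopen1 wopen1)
           (simp add: openin_prod_Times_iff wopen1 flip: tsp1)
    qed
  qed
  have SG2: "topological_semigroup tau2 (\<circ>\<^sub>m)"
  proof (rule tsg[OF tau2_def])
    show "\<Union>({vset x y | x y. True} \<union> {w2set y | y. True}) = Inat" using UN_gen[of pinv] gen_pinv by simp
    fix U assume "U \<in> {vset x y | x y. True} \<union> {w2set y | y. True}"
    then consider x y where "U = vset x y" | y where "U = w2set y" by blast
    then show "openin (prod_topology tau2 tau2) ((\<lambda>(a,b). a \<circ>\<^sub>m b) -` U \<inter> (Inat \<times> Inat))"
    proof cases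
      case (1 x y) show ?thesis unfolding 1 pre_v by (intro open_UN_times vopen2)
    next
      case (2 y) show ?thesis unfolding 2 pre_w2
        by (intro openin_Un open_UN_times vopen2 wopen2)
           (simp add: openin_prod_Times_iff wopen2 flip: tsp2)
    qed
  qed
  show ?thesis using tsp1 P1 SG1 M1 C1 T1 tsp2 P2 SG2 M2 C2 T2 by blast
qed

end
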